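(* Let $\varpi(x,y)$ and $\varrho(x,y)$ be $2$-homogeneous rational functions with $x\varrho(x,y)-y\varpi(x,y)\neq 0$ (not identically zero). Suppose a pair of functions $(u,v)=(u(x,y),v(x,y))$ satisfies the system of partial differential equations $$u_{x}(\varpi-x)+u_{y}(\varrho-y)=-u,\qquad v_{x}(\varpi-x)+v_{y}(\varrho-y)=-v,$$ together with the boundary conditions $$\lim_{z\to 0}\frac{u(xz,yz)}{z}=x,\qquad \lim_{z\to 0}\frac{v(xz,yz)}{z}=y.$$ Let $f$ be a solution of the ordinary differential equation $$f(x)\varrho(x,1)+f'(x)\big(x\varrho(x,1)-\varpi(x,1)\big)=1,$$ and let $\mathscr{W}(x,y)$ be a $1$-homogeneous solution of $$\mathscr{W}(x,y)\varrho(x,y)+\mathscr{W}_{x}(x,y)\big[y\varpi(x,y)-x\varrho(x,y)\big]=0.$$ Then $$\mathscr{W}(u,v)=\mathscr{W}(x,y),\qquad \frac{1}{v}f\Big(\frac{u}{v}\Big)=\frac{1}{y}f\Big(\frac{x}{y}\Big)-1.$$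
   Context: The functions $f$ and $\mathscr{W}$ may be multivalued (e.g. algebraic or transcendental). In that case the second identity is to be understood as follows: with $u^{z}(x,y)=z^{-1}u(xz,yz)$ and $v^{z}(x,y)=z^{-1}v(xz,yz)$, one has $\frac{1}{v^{z}}f\big(\frac{u^{z}}{v^{z}}\big)=\frac{1}{y}f\big(\frac{x}{y}\big)-z$ and $\mathscr{W}(u^z,v^z)=\mathscr{W}(x,y)$ for $z$ small enough, with branches chosen continuously from $z=0$ (where $(u^z,v^z)=(x,y)$). *)

theory Defs
  imports "HOL-Analysis.Analysis" "HOL-Computational_Algebra.Polynomial"
begin

text \<open>Bivariate real polynomials are represented as \<open>real poly poly\<close>:
  the outer variable is y, the coefficients are polynomials in x.\<close>
definition poly2 :: "real poly poly \<Rightarrow> real \<Rightarrow> real \<Rightarrow> real" where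
  "poly2 P x y = poly (poly P [:y:]) x"

definition rat2 :: "real poly poly \<Rightarrow> real poly poly \<Rightarrow> real \<Rightarrow> real \<Rightarrow> real" where
  "rat2 P Q x y = poly2 P x y / poly2 Q x y"

text \<open>P/Q is a k-homogeneous rational function: P(tx,ty)/Q(tx,ty) = t^k P(x,y)/Q(x,y)
  as an identity of rational functions, i.e. after clearing denominators.\<close>
definition homogeneous_rat2 :: "nat \<Rightarrow> real poly poly \<Rightarrow> real poly poly \<Rightarrow> bool" where
  "homogeneous_rat2 k P Q \<longleftrightarrow> Q \<noteq> 0 \<and>
     (\<forall>t x y. poly2 P (t*x) (t*y) * poly2 Q x y = t^k * poly2 P x y * poly2 Q (t*x) (t*y))"

end

theory Submission
  imports Defs
begin

lemma chain2:
  fixes u :: "real \<Rightarrow> real \<Rightarrow> real"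
  assumes du: "((\<lambda>(a,b). u a b) has_derivative (\<lambda>(h,k). ux * h + uy * k)) (at (wa t, wb t))"
    and da: "(wa has_real_derivative da) (at t)" and db: "(wb has_real_derivative db) (at t)"
  shows "((\<lambda>t. u (wa t) (wb t)) has_real_derivative (ux * da + uy * db)) (at t)"
proof -
  have p: "((\<lambda>t. (wa t, wb t)) has_derivative (\<lambda>h. (da * h, db * h))) (at t)"
    using has_derivative_Pair[OF da[unfolded has_field_derivative_def] db[unfolded has_field_derivative_def]] by simp
  have "(((\<lambda>(a,b). u a b) \<circ> (\<lambda>t. (wa t, wb t))) has_derivative ((\<lambda>(h,k). ux * h + uy * k) \<circ> (\<lambda>h. (da * h, db * h)))) (at t)"
    by (rule diff_chain_at[OF p du])
  moreover have "((\<lambda>(a,b). u a b) \<circ> (\<lambda>t. (wa t, wb t))) = (\<lambda>t. u (wa t) (wb t))" by (simp add: o_def)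
  moreover have "((\<lambda>(h,k). ux * h + uy * k) \<circ> (\<lambda>h. (da * h, db * h))) = (*) (ux * da + uy * db)"
    by (simp add: o_def fun_eq_iff algebra_simps)
  ultimately show ?thesis unfolding has_field_derivative_def by simp
qed

lemma hom_scale:
  assumes h: "homogeneous_rat2 k P Q" and q1: "poly2 Q x y \<noteq> 0" and q2: "poly2 Q (s*x) (s*y) \<noteq> 0"
  shows "rat2 P Q (s*x) (s*y) = s^k * rat2 P Q x y"
proof -
  have "poly2 P (s*x) (s*y) * poly2 Q x y = s^k * poly2 P x y * poly2 Q (s*x) (s*y)"
    using h unfolding homogeneous_rat2_def by blast
  then show ?thesis unfolding rat2_def using q1 q2 by (simp add: field_simps)
qed

lemma const_seg:
  fixes k :: "real \<Rightarrow> real"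
  assumes "lo \<le> hi" and d: "\<And>t. lo \<le> t \<Longrightarrow> t \<le> hi \<Longrightarrow> (k has_real_derivative 0) (at t)"
  shows "k hi = k lo"
proof (cases "lo < hi")
  case True
  have "continuous_on {lo..hi} k"
    using d by (meson DERIV_atLeastAtMost_imp_continuous_on)
  then show ?thesis using DERIV_isconst2[OF True, of k hi] d assms(1) by auto
next
  case False then show ?thesis using assms by auto
qed

lemma cont_poly2: "isCont (\<lambda>t. poly2 P t 1) t"
  unfolding poly2_def by (rule poly_isCont)

lemma lim_scaled:
  fixes g :: "real \<Rightarrow> real"
  assumes "(g \<longlongrightarrow> c) (at 0)" and "z \<noteq> 0"
  shows "((\<lambda>\<theta>. g (z*\<theta>)) \<longlongrightarrow> c) (at_right 0)"
proof -
  have "filterlim (\<lambda>\<theta>. z*\<theta>) (at 0) (at_right 0)"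
    unfolding filterlim_at
  proof
    show "\<forall>\<^sub>F x in at_right 0. z * x \<in> UNIV \<and> z * x \<noteq> 0"
      using assms(2) by (auto simp: eventually_at_right_less eventually_at_filter)
    show "((*) z \<longlongrightarrow> 0) (at_right 0)"
      by (auto intro!: tendsto_eq_intros)
  qed
  then show ?thesis using filterlim_compose[OF assms(1)] by blast
qed

lemma alg1:
  fixes X Y F Z y t a b A :: real
  assumes "A \<noteq> 0" "y \<noteq> 0" "a = A + t*b"
    and pde: "X*((Z*y)^2*a - Z*(t*y)) + Y*((Z*y)^2*b - Z*y) = -F"
  shows "(X*((-1/(y*A))*(t*y) + (1*y + (y*(b/A))*t)*Z) + Y*((-1/(y*A))*y + (y*(b/A))*Z))*Z - F*(-1/(y*A)) = 0"
proof -
  have "((X*((-1/(y*A))*(t*y) + (1*y + (y*(b/A))*t)*Z) + Y*((-1/(y*A))*y + (y*(b/A))*Z))*Z - F*(-1/(y*A))) * (y*A)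
      = X*((Z*y)^2*a - Z*(t*y)) + Y*((Z*y)^2*b - Z*y) + F"
    using assms(1,2) unfolding assms(3) by (simp add: field_simps power2_eq_square)
  also have "\<dots> = 0" using pde by simp
  finally show ?thesis using assms(1,2) by simp
qed
lemma alg2:
  fixes Wx Wy Wv y t a b A :: real
  assumes "A \<noteq> 0" "y \<noteq> 0" "a = A + t*b"
    and eu: "t*y*Wx + y*Wy = Wv"
    and pde: "Wv*(y^2*b) + Wx*(y*(y^2*a) - t*y*(y^2*b)) = 0"
  shows "Wx*(1*y + (y*(b/A))*t) + Wy*(y*(b/A)) = 0"
proof -
  have p2: "Wv*b + Wx*y*A = 0"
  proof -
    have "y^2 * (Wv*b + Wx*y*A) = 0" using pde unfolding assms(3) by (simp add: algebra_simps power2_eq_square)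
    then show ?thesis using assms(2) by simp
  qed
  have "(Wx*(1*y + (y*(b/A))*t) + Wy*(y*(b/A))) * A = Wx*y*A + b*(t*y*Wx + y*Wy)"
    using assms(1) by (simp add: field_simps)
  also have "\<dots> = 0" using p2 eu by (simp add: algebra_simps)
  finally show ?thesis using assms(1) by simp
qed

context
  fixes Pw Qw Pr Qr :: "real poly poly"
    and u v ux uy vx vy W Wx Wy :: "real \<Rightarrow> real \<Rightarrow> real"
    and f f' :: "real \<Rightarrow> real"
    and x0 y0 \<delta> :: real
    and U N :: "(real \<times> real) set" and J :: "real set"
  assumes hom_w: "homogeneous_rat2 2 Pw Qw"
    and hom_r: "homogeneous_rat2 2 Pr Qr"
    and nondeg: "\<exists>x y. x * poly2 Pr x y * poly2 Qw x y - y * poly2 Pw x y * poly2 Qr x y \<noteq> 0"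
    and U_open: "open U" and x0y0_U: "(x0, y0) \<in> U" and delta_pos: "\<delta> > 0"
    and uv_dom: "\<forall>(x,y)\<in>U. \<forall>s. s \<noteq> 0 \<and> \<bar>s\<bar> < \<delta> \<longrightarrow>
                   poly2 Qw (s*x) (s*y) \<noteq> 0 \<and> poly2 Qr (s*x) (s*y) \<noteq> 0"
    and u_diff: "\<forall>(x,y)\<in>U. \<forall>s. s \<noteq> 0 \<and> \<bar>s\<bar> < \<delta> \<longrightarrow>
                   ((\<lambda>(a,b). u a b) has_derivative
                      (\<lambda>(h,k). ux (s*x) (s*y) * h + uy (s*x) (s*y) * k)) (at (s*x, s*y))"
    and v_diff: "\<forall>(x,y)\<in>U. \<forall>s. s \<noteq> 0 \<and> \<bar>s\<bar> < \<delta> \<longrightarrow>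
                   ((\<lambda>(a,b). v a b) has_derivative
                      (\<lambda>(h,k). vx (s*x) (s*y) * h + vy (s*x) (s*y) * k)) (at (s*x, s*y))"
    and u_pde: "\<forall>(x,y)\<in>U. \<forall>s. s \<noteq> 0 \<and> \<bar>s\<bar> < \<delta> \<longrightarrow>
                   ux (s*x) (s*y) * (rat2 Pw Qw (s*x) (s*y) - s*x)
                 + uy (s*x) (s*y) * (rat2 Pr Qr (s*x) (s*y) - s*y) = - u (s*x) (s*y)"
    and v_pde: "\<forall>(x,y)\<in>U. \<forall>s. s \<noteq> 0 \<and> \<bar>s\<bar> < \<delta> \<longrightarrow>
                   vx (s*x) (s*y) * (rat2 Pw Qw (s*x) (s*y) - s*x)
                 + vy (s*x) (s*y) * (rat2 Pr Qr (s*x) (s*y) - s*y) = - v (s*x) (s*y)"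
    and u_bd: "\<forall>(x,y)\<in>U. ((\<lambda>z. u (x*z) (y*z) / z) \<longlongrightarrow> x) (at 0)"
    and v_bd: "\<forall>(x,y)\<in>U. ((\<lambda>z. v (x*z) (y*z) / z) \<longlongrightarrow> y) (at 0)"
    and y0_nz: "y0 \<noteq> 0"
    and J_open: "open J" and J_pt: "x0 / y0 \<in> J"
    and f_ode: "\<forall>t\<in>J. poly2 Qw t 1 \<noteq> 0 \<and> poly2 Qr t 1 \<noteq> 0 \<and>
                   (f has_real_derivative f' t) (at t) \<and>
                   f t * rat2 Pr Qr t 1 + f' t * (t * rat2 Pr Qr t 1 - rat2 Pw Qw t 1) = 1"
    and N_open: "open N" and x0y0_N: "(x0, y0) \<in> N"
    and N_dom: "\<forall>(x,y)\<in>N. poly2 Qw x y \<noteq> 0 \<and> poly2 Qr x y \<noteq> 0"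
    and W_hom: "\<forall>(x,y)\<in>N. \<forall>t>0. (t*x, t*y) \<in> N \<longrightarrow> W (t*x) (t*y) = t * W x y"
    and W_diff: "\<forall>(x,y)\<in>N. ((\<lambda>(a,b). W a b) has_derivative
                   (\<lambda>(h,k). Wx x y * h + Wy x y * k)) (at (x, y))"
    and W_pde: "\<forall>(x,y)\<in>N. W x y * rat2 Pr Qr x y
                   + Wx x y * (y * rat2 Pw Qw x y - x * rat2 Pr Qr x y) = 0"
begin

lemma case_zero:
  assumes A0: "rat2 Pw Qw (x0/y0) 1 - (x0/y0) * rat2 Pr Qr (x0/y0) 1 = 0"
  shows "\<forall>\<^sub>F z in at 0.
           (let uz = u (x0*z) (y0*z) / z; vz = v (x0*z) (y0*z) / z in
              W uz vz = W x0 y0 \<and> 1 / vz * f (uz / vz) = 1 / y0 * f (x0 / y0) - z)"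
proof -
  define t0 where "t0 = x0/y0"
  have x0e: "x0 = t0*y0" using y0_nz by (simp add: t0_def)
  have t0J: "t0 \<in> J" using J_pt t0_def by simp
  have qw1: "poly2 Qw t0 1 \<noteq> 0" and qr1: "poly2 Qr t0 1 \<noteq> 0"
    and ode0: "f t0 * rat2 Pr Qr t0 1 + f' t0 * (t0 * rat2 Pr Qr t0 1 - rat2 Pw Qw t0 1) = 1"
    using f_ode t0J by auto
  define b0 where "b0 = rat2 Pr Qr t0 1"
  have a0: "rat2 Pw Qw t0 1 = t0*b0" using A0 by (simp add: b0_def t0_def)
  have fb: "f t0 * b0 = 1" using ode0 a0 by (simp add: b0_def)
  define lam where "lam = y0*b0"
  have scW: "rat2 Pw Qw (s*x0) (s*y0) = (s*y0)^2 * (t0*b0)" if "poly2 Qw (s*x0) (s*y0) \<noteq> 0" for s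
  proof -
    have e: "(s*y0)*t0 = s*x0" "(s*y0)*1 = s*y0" using x0e by auto
    show ?thesis using hom_scale[OF hom_w qw1, of "s*y0"] that a0 unfolding e by simp
  qed
  have scR: "rat2 Pr Qr (s*x0) (s*y0) = (s*y0)^2 * b0" if "poly2 Qr (s*x0) (s*y0) \<noteq> 0" for s
  proof -
    have e: "(s*y0)*t0 = s*x0" "(s*y0)*1 = s*y0" using x0e by auto
    show ?thesis using hom_scale[OF hom_r qr1, of "s*y0"] that unfolding e b0_def by simp
  qed
  have key: "\<forall>z. z \<noteq> 0 \<and> \<bar>z\<bar> < \<delta> \<longrightarrow> \<phi> (z*x0) (z*y0) * (1 - lam*z) / z = c"
    if dif: "\<forall>(x,y)\<in>U. \<forall>s. s \<noteq> 0 \<and> \<bar>s\<bar> < \<delta> \<longrightarrow>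
                   ((\<lambda>(a,b). \<phi> a b) has_derivative
                      (\<lambda>(h,k). \<phi>x (s*x) (s*y) * h + \<phi>y (s*x) (s*y) * k)) (at (s*x, s*y))"
    and pde: "\<forall>(x,y)\<in>U. \<forall>s. s \<noteq> 0 \<and> \<bar>s\<bar> < \<delta> \<longrightarrow>
                   \<phi>x (s*x) (s*y) * (rat2 Pw Qw (s*x) (s*y) - s*x)
                 + \<phi>y (s*x) (s*y) * (rat2 Pr Qr (s*x) (s*y) - s*y) = - \<phi> (s*x) (s*y)"
    and bd: "((\<lambda>z. \<phi> (x0*z) (y0*z) / z) \<longlongrightarrow> c) (at 0)"
  for \<phi> \<phi>x \<phi>y :: "real \<Rightarrow> real \<Rightarrow> real" and c
  proof (intro allI impI)
    fix z assume z: "z \<noteq> 0 \<and> \<bar>z\<bar> < \<delta>"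
    define K where "K = (\<lambda>r. \<phi> (r*x0) (r*y0) * (1 - lam*r) / r)"
    have dK: "(K has_real_derivative 0) (at s)" if s: "s \<noteq> 0" "\<bar>s\<bar> < \<delta>" for s
    proof -
      have d1: "((\<lambda>s. \<phi> (s*x0) (s*y0)) has_real_derivative (\<phi>x (s*x0) (s*y0) * x0 + \<phi>y (s*x0) (s*y0) * y0)) (at s)"
      proof -
        have du: "((\<lambda>(a,b). \<phi> a b) has_derivative (\<lambda>(h,k). \<phi>x (s*x0) (s*y0) * h + \<phi>y (s*x0) (s*y0) * k)) (at (s*x0, s*y0))"
          using dif x0y0_U s by auto
        show ?thesis
          by (rule chain2[where wa="\<lambda>r. r*x0" and wb="\<lambda>r. r*y0", OF du]) (auto intro!: derivative_eq_intros)
      qed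
      have p: "\<phi>x (s*x0) (s*y0) * (rat2 Pw Qw (s*x0) (s*y0) - s*x0)
                 + \<phi>y (s*x0) (s*y0) * (rat2 Pr Qr (s*x0) (s*y0) - s*y0) = - \<phi> (s*x0) (s*y0)"
        using pde x0y0_U s by auto
      have qq: "poly2 Qw (s*x0) (s*y0) \<noteq> 0" "poly2 Qr (s*x0) (s*y0) \<noteq> 0" using uv_dom x0y0_U s by auto
      have p2: "(s*lam - 1) * s * (\<phi>x (s*x0) (s*y0) * x0 + \<phi>y (s*x0) (s*y0) * y0) = - \<phi> (s*x0) (s*y0)"
        using p[unfolded scW[OF qq(1)] scR[OF qq(2)]] unfolding lam_def x0e
        by (simp add: algebra_simps power2_eq_square)
      show ?thesis unfolding K_def
        apply (rule derivative_eq_intros refl d1 | simp add: s)+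
        using s p2 by (simp add: field_simps) (simp add: algebra_simps)?
    qed
    have eqth: "K (z*\<theta>) = K z" if th: "0 < \<theta>" "\<theta> < 1" for \<theta>
    proof -
      have bnd: "r \<noteq> 0 \<and> \<bar>r\<bar> < \<delta>" if "min (z*\<theta>) z \<le> r" "r \<le> max (z*\<theta>) z" for r
      proof (cases "z > 0")
        case True
        then have "0 < z*\<theta>" "z*\<theta> \<le> z" using th by (auto simp: mult_left_le)
        then show ?thesis using that z by auto
      next
        case False
        then have zn: "z < 0" using z by auto
        then have "z*\<theta> < 0" "z \<le> z*\<theta>" using th by (auto simp: mult_neg_pos mult_left_le_imp_le)
        then show ?thesis using that z zn by auto
      qed
      have "K (max (z*\<theta>) z) = K (min (z*\<theta>) z)"
        by (rule const_seg) (auto intro!: dK dest!: bnd)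
      then show ?thesis by (auto simp: min_def max_def split: if_splits)
    qed
    define g where "g = (\<lambda>r. \<phi> (x0*r) (y0*r) / r)"
    have Kg: "K r = g r * (1 - lam*r)" for r by (simp add: K_def g_def mult.commute)
    have "((\<lambda>\<theta>. g (z*\<theta>) * (1 - lam*(z*\<theta>))) \<longlongrightarrow> c * (1 - lam*(z*0))) (at_right 0)"
      using bd z unfolding g_def[symmetric] by (intro tendsto_intros lim_scaled) auto
    then have L: "((\<lambda>\<theta>. K (z*\<theta>)) \<longlongrightarrow> c) (at_right 0)" by (simp add: Kg)
    have E: "eventually (\<lambda>\<theta>. K z = K (z*\<theta>)) (at_right 0)"
      by (rule eventually_at_rightI[of 0 1]) (use eqth in auto)
    have "((\<lambda>\<theta>::real. K z) \<longlongrightarrow> c) (at_right 0)" using tendsto_cong[OF E, of c] L by simp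
    then have "K z = c" by (simp add: tendsto_const_iff)
    then show "\<phi> (z*x0) (z*y0) * (1 - lam*z) / z = c" by (simp add: K_def)
  qed
  have ubd: "((\<lambda>z. u (x0*z) (y0*z) / z) \<longlongrightarrow> x0) (at 0)" using u_bd x0y0_U by auto
  have vbd: "((\<lambda>z. v (x0*z) (y0*z) / z) \<longlongrightarrow> y0) (at 0)" using v_bd x0y0_U by auto
  note ku = key[OF u_diff u_pde ubd] and kv = key[OF v_diff v_pde vbd]
  have b0nz: "b0 \<noteq> 0" using fb by auto
  have W0: "W x0 y0 = 0"
  proof -
    have qN: "poly2 Qw (1*x0) (1*y0) \<noteq> 0" "poly2 Qr (1*x0) (1*y0) \<noteq> 0" using N_dom x0y0_N by auto
    have "W x0 y0 * rat2 Pr Qr x0 y0 + Wx x0 y0 * (y0 * rat2 Pw Qw x0 y0 - x0 * rat2 Pr Qr x0 y0) = 0"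
      using W_pde x0y0_N by auto
    then have "W x0 y0 * (y0^2 * b0) = 0"
      using scW[OF qN(1)] scR[OF qN(2)] x0e by (simp add: algebra_simps power2_eq_square)
    then show ?thesis using b0nz y0_nz by simp
  qed
  have E1: "eventually (\<lambda>z. z \<noteq> 0 \<and> \<bar>z\<bar> < \<delta>) (at (0::real))"
    unfolding eventually_at using delta_pos by (intro exI[of _ \<delta>]) auto
  have T1: "((\<lambda>z. 1 - lam*z) \<longlongrightarrow> 1) (at (0::real))"
    by (auto intro!: tendsto_eq_intros)
  have E2: "eventually (\<lambda>z. 0 < 1 - lam*z) (at (0::real))"
    using order_tendstoD(1)[OF T1, of 0] by simp
  have T3: "((\<lambda>z. ((1/(1 - lam*z))*x0, (1/(1 - lam*z))*y0)) \<longlongrightarrow> (x0, y0)) (at (0::real))"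
    by (auto intro!: tendsto_eq_intros)
  have E3: "eventually (\<lambda>z. ((1/(1 - lam*z))*x0, (1/(1 - lam*z))*y0) \<in> N) (at (0::real))"
    by (rule topological_tendstoD[OF T3 N_open x0y0_N])
  show ?thesis
  proof (rule eventually_mono[OF eventually_conj[OF E1 eventually_conj[OF E2 E3]]])
    fix z :: real assume zz: "(z \<noteq> 0 \<and> \<bar>z\<bar> < \<delta>) \<and> 0 < 1 - lam*z \<and> ((1/(1 - lam*z))*x0, (1/(1 - lam*z))*y0) \<in> N"
    define c where "c = 1/(1 - lam*z)"
    have cpos: "c > 0" using zz by (simp add: c_def)
    have uz: "u (x0*z) (y0*z) / z = c*x0"
    proof -
      have "u (z*x0) (z*y0) * (1 - lam*z) / z = x0" using ku zz by blast
      then show ?thesis using zz by (simp add: c_def field_simps mult.commute)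
    qed
    have vz: "v (x0*z) (y0*z) / z = c*y0"
    proof -
      have "v (z*x0) (z*y0) * (1 - lam*z) / z = y0" using kv zz by blast
      then show ?thesis using zz by (simp add: c_def field_simps mult.commute)
    qed
    have WW: "W (c*x0) (c*y0) = W x0 y0"
    proof -
      have "\<forall>t>0. (t * x0, t * y0) \<in> N \<longrightarrow> W (t * x0) (t * y0) = t * W x0 y0" using W_hom x0y0_N by auto
      then show ?thesis using cpos zz W0 unfolding c_def[symmetric] by auto
    qed
    have "1 / (c*y0) * f ((c*x0) / (c*y0)) = 1 / y0 * f (x0 / y0) - z"
    proof -
      have "(c*x0) / (c*y0) = t0" using cpos y0_nz by (simp add: t0_def)
      moreover have "1 / (c*y0) * f t0 = 1 / y0 * f t0 - z"
        using zz y0_nz fb unfolding c_def lam_def by (simp add: field_simps)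
      ultimately show ?thesis by (simp add: t0_def)
    qed
    then show "let uz = u (x0*z) (y0*z) / z; vz = v (x0*z) (y0*z) / z in
              W uz vz = W x0 y0 \<and> 1 / vz * f (uz / vz) = 1 / y0 * f (x0 / y0) - z"
      using WW uz vz by (simp add: Let_def)
  qed
qed


lemma euler_W:
  assumes xy: "(x,y) \<in> N"
  shows "x * Wx x y + y * Wy x y = W x y"
proof -
  have du: "((\<lambda>(a,b). W a b) has_derivative (\<lambda>(h,k). Wx x y * h + Wy x y * k)) (at (1*x, 1*y))"
    using W_diff xy by auto
  have d1: "((\<lambda>\<tau>. W (\<tau>*x) (\<tau>*y)) has_real_derivative (Wx x y * x + Wy x y * y)) (at 1)"
    by (rule chain2[where wa="\<lambda>r. r*x" and wb="\<lambda>r. r*y", OF du]) (auto intro!: derivative_eq_intros)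
  define S where "S = {0<..} \<inter> (\<lambda>\<tau>::real. (\<tau>*x, \<tau>*y)) -` N"
  have oS: "open S" unfolding S_def
    by (intro open_Int open_greaterThan continuous_open_vimage N_open) (auto intro!: continuous_intros)
  have 1: "1 \<in> S" using xy by (simp add: S_def)
  have "((\<lambda>\<tau>. \<tau> * W x y) has_real_derivative W x y) (at 1)"
    by (auto intro!: derivative_eq_intros)
  then have "((\<lambda>\<tau>. W (\<tau>*x) (\<tau>*y)) has_real_derivative W x y) (at 1)"
  proof (rule has_field_derivative_transform_within_open[OF _ oS 1])
    fix \<tau> assume "\<tau> \<in> S"
    then show "\<tau> * W x y = W (\<tau>*x) (\<tau>*y)" using W_hom xy by (auto simp: S_def)
  qed
  with d1 show ?thesis using DERIV_unique by (fastforce simp: mult.commute)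
qed

lemma cont_rat2: "poly2 Q t 1 \<noteq> 0 \<Longrightarrow> isCont (\<lambda>t. rat2 P Q t 1) t"
  unfolding rat2_def by (intro isCont_divide cont_poly2)


lemma case_nonzero:
  assumes A0: "rat2 Pw Qw (x0/y0) 1 - (x0/y0) * rat2 Pr Qr (x0/y0) 1 \<noteq> 0"
  shows "\<forall>\<^sub>F z in at 0.
           (let uz = u (x0*z) (y0*z) / z; vz = v (x0*z) (y0*z) / z in
              W uz vz = W x0 y0 \<and> 1 / vz * f (uz / vz) = 1 / y0 * f (x0 / y0) - z)"
proof -
  define t0 where "t0 = x0/y0"
  have x0e: "x0 = t0*y0" using y0_nz by (simp add: t0_def)
  have t0J: "t0 \<in> J" using J_pt t0_def by simp
  define a where "a = (\<lambda>t. rat2 Pw Qw t 1)"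
  define b where "b = (\<lambda>t. rat2 Pr Qr t 1)"
  define A where "A = (\<lambda>t. a t - t * b t)"
  have At0: "A t0 \<noteq> 0" using A0 by (simp add: A_def a_def b_def t0_def)
  have Jfacts: "poly2 Qw t 1 \<noteq> 0 \<and> poly2 Qr t 1 \<noteq> 0 \<and> (f has_real_derivative f' t) (at t)
       \<and> f t * b t - f' t * A t = 1" if "t \<in> J" for t
    using f_ode that unfolding A_def a_def b_def by (auto simp: algebra_simps)
  have Acont: "isCont A t" if "t \<in> J" for t
    using Jfacts[OF that] unfolding A_def a_def b_def by (intro continuous_intros cont_rat2) auto
  have bcont: "isCont b t" if "t \<in> J" for t
    using Jfacts[OF that] unfolding b_def by (intro cont_rat2) auto
  have sq0: "A t0 * A t0 > 0" using At0 not_real_square_gt_zero by blast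
  obtain \<eta> where eta: "\<eta> > 0" "\<And>t. \<bar>t - t0\<bar> < \<eta> \<Longrightarrow> t \<in> J \<and> A t * A t0 > 0"
  proof -
    have e1: "eventually (\<lambda>t. t \<in> J) (at t0)"
      using eventually_nhds_in_open[OF J_open t0J] unfolding eventually_at_filter by (rule eventually_mono) auto
    have "(A \<longlongrightarrow> A t0) (at t0)" using Acont[OF t0J] by (simp add: isCont_def)
    then have "((\<lambda>t. A t * A t0) \<longlongrightarrow> A t0 * A t0) (at t0)" by (intro tendsto_intros)
    moreover have "A t0 * A t0 > 0" using At0 not_real_square_gt_zero by blast
    ultimately have e2: "eventually (\<lambda>t. A t * A t0 > 0) (at t0)" by (rule order_tendstoD(1))
    obtain d where d: "d > 0" "\<And>t. t \<noteq> t0 \<Longrightarrow> dist t t0 < d \<Longrightarrow> t \<in> J \<and> A t * A t0 > 0"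
      using eventually_conj[OF e1 e2] unfolding eventually_at by auto
    show ?thesis
    proof (rule that[OF d(1)])
      fix t assume "\<bar>t - t0\<bar> < d"
      then show "t \<in> J \<and> A t * A t0 > 0"
        using d(2)[of t] t0J sq0 by (cases "t = t0") (auto simp: dist_real_def)
    qed
  qed
  define e where "e = \<eta>/2"
  have e: "e > 0" "e < \<eta>" using eta by (auto simp: e_def)
  have inJ: "t \<in> J" and Apos: "A t * A t0 > 0" if "\<bar>t - t0\<bar> \<le> e" for t
    using eta(2)[of t] that e by auto
  have Anz: "A t \<noteq> 0" if "\<bar>t - t0\<bar> \<le> e" for t using Apos[OF that] by auto
  define c where "c = (\<lambda>t. b t / A t)"
  have ccont: "continuous_on {t0-e..t0+e} c"
    unfolding c_def
    by (intro continuous_at_imp_continuous_on ballI isCont_divide bcont Acont inJ Anz) (auto simp: abs_le_iff)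
  define H where "H = (\<lambda>t. integral {t0-e..t} c)"
  have dH: "(H has_real_derivative c t) (at t)" if "\<bar>t - t0\<bar> < e" for t
  proof -
    have "(H has_real_derivative c t) (at t within {t0-e..t0+e})"
      unfolding H_def using that by (intro integral_has_real_derivative ccont) auto
    moreover have "at t within {t0-e..t0+e} = at t" using that by (intro at_within_Icc_at) auto
    ultimately show ?thesis by simp
  qed
  define y where "y = (\<lambda>t. y0 * exp (H t - H t0))"
  have yt0: "y t0 = y0" by (simp add: y_def)
  have dy: "(y has_real_derivative y t * c t) (at t)" if "\<bar>t - t0\<bar> < e" for t
  proof -
    have "((\<lambda>t. y0 * exp (H t - H t0)) has_real_derivative y0 * (exp (H t - H t0) * (c t - 0))) (at t)"
      by (intro DERIV_cmult DERIV_fun_exp DERIV_diff dH[OF that] DERIV_const)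
    then show ?thesis by (simp add: y_def mult.assoc)
  qed
  have ypos: "y t * y0 > 0" for t
  proof -
    have "y t * y0 = (y0 * y0) * exp (H t - H t0)" unfolding y_def by (simp only: ac_simps)
    moreover have "y0 * y0 > 0" using y0_nz not_real_square_gt_zero by blast
    ultimately show ?thesis by (metis mult_pos_pos exp_gt_zero)
  qed
  have ynz: "y t \<noteq> 0" for t using ypos[of t] by auto
  obtain e2 where e2: "0 < e2" "e2 < e" "\<And>t. \<bar>t - t0\<bar> \<le> e2 \<Longrightarrow> (t * y t, y t) \<in> U \<inter> N"
  proof -
    have "isCont y t0" using dy[of t0] e by (auto intro: DERIV_isCont)
    then have "((\<lambda>t. (t * y t, y t)) \<longlongrightarrow> (t0 * y t0, y t0)) (at t0)"
      unfolding isCont_def by (intro tendsto_intros) auto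
    then have "((\<lambda>t. (t * y t, y t)) \<longlongrightarrow> (x0, y0)) (at t0)" using yt0 x0e by simp
    then have "eventually (\<lambda>t. (t * y t, y t) \<in> U \<inter> N) (at t0)"
      by (rule topological_tendstoD) (use U_open N_open x0y0_U x0y0_N in auto)
    then obtain d where d: "d > 0" "\<And>t. t \<noteq> t0 \<Longrightarrow> dist t t0 < d \<Longrightarrow> (t * y t, y t) \<in> U \<inter> N"
      unfolding eventually_at by auto
    show ?thesis
    proof (rule that[of "min d e / 2"])
      show "0 < min d e / 2" "min d e / 2 < e" using d e by auto
      fix t assume "\<bar>t - t0\<bar> \<le> min d e / 2"
      then show "(t * y t, y t) \<in> U \<inter> N"
        using d(1) d(2)[of t] x0y0_U x0y0_N yt0 x0e by (cases "t = t0") (auto simp: dist_real_def)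
    qed
  qed
  define R where "R = (\<lambda>t. f t / y t)"
  have dR: "(R has_real_derivative (- 1 / (y t * A t))) (at t)" if "\<bar>t - t0\<bar> < e" for t
  proof -
    have J: "(f has_real_derivative f' t) (at t)" "f t * b t - f' t * A t = 1"
      using Jfacts[OF inJ] that by auto
    have "(R has_real_derivative (f' t * y t - f t * (y t * c t)) / (y t * y t)) (at t)"
      unfolding R_def by (rule DERIV_divide[OF J(1) dy[OF that] ynz])
    moreover have "(f' t * y t - f t * (y t * c t)) / (y t * y t) = - 1 / (y t * A t)"
    proof -
      have h1: "f' t * y t - f t * (y t * c t) = y t * (f' t * A t - f t * b t) / A t"
        using Anz[of t] that by (simp add: c_def field_simps)
      have h2: "f' t * A t - f t * b t = -1" using J(2) by (simp add: algebra_simps)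
      have "(f' t * y t - f t * (y t * c t)) / (y t * y t) = (- y t / A t) / (y t * y t)"
        using h1[unfolded h2] by simp
      also have "\<dots> = - 1 / (y t * A t)" using ynz[of t] Anz[of t] that by (simp add: field_simps)
      finally show ?thesis .
    qed
    ultimately show ?thesis by simp
  qed
  define D0 where "D0 = y0 * A t0"
  have D0nz: "D0 \<noteq> 0" using y0_nz At0 by (simp add: D0_def)
  define S where "S = (\<lambda>t. - D0 * R t)"
  have dS: "(S has_real_derivative D0 / (y t * A t)) (at t)" "D0 / (y t * A t) > 0" if "\<bar>t - t0\<bar> < e" for t
  proof -
    show "(S has_real_derivative D0 / (y t * A t)) (at t)"
      unfolding S_def using DERIV_cmult[OF dR[OF that], of "- D0"] by simp
    have "D0 * (y t * A t) > 0"
    proof -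
      have "D0 * (y t * A t) = (y t * y0) * (A t * A t0)" by (simp add: D0_def algebra_simps)
      also have "\<dots> > 0" using ypos Apos[of t] that by auto
      finally show ?thesis .
    qed
    then show "D0 / (y t * A t) > 0" by (simp add: divide_pos_pos zero_less_mult_iff zero_less_divide_iff)
  qed
  have Smono: "S t1 < S t2" if "t1 < t2" "\<bar>t1 - t0\<bar> \<le> e2" "\<bar>t2 - t0\<bar> \<le> e2" for t1 t2
  proof (rule DERIV_pos_imp_increasing[OF that(1)])
    fix t assume "t1 \<le> t" "t \<le> t2"
    then have "\<bar>t - t0\<bar> < e" using that e2 by auto
    then show "\<exists>D. (S has_real_derivative D) (at t) \<and> 0 < D" using dS by blast
  qed
  have Scont: "isCont S t" if "\<bar>t - t0\<bar> \<le> e2" for t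
    using dS(1)[of t] that e2 by (auto intro: DERIV_isCont)
  have aAb: "a t = A t + t * b t" for t by (simp add: A_def)
  have dW: "((\<lambda>t. W (t * y t) (y t)) has_real_derivative 0) (at t)" if tt: "\<bar>t - t0\<bar> \<le> e2" for t
  proof -
    have tN: "(t * y t, y t) \<in> N" and te: "\<bar>t - t0\<bar> < e" using e2(3)[OF tt] tt e2 by auto
    have du: "((\<lambda>(a,b). W a b) has_derivative (\<lambda>(h,k). Wx (t * y t) (y t) * h + Wy (t * y t) (y t) * k)) (at (t * y t, y t))"
      using W_diff tN by auto
    have dty: "((\<lambda>t. t * y t) has_real_derivative 1 * y t + (y t * c t) * t) (at t)"
      by (rule DERIV_mult[OF DERIV_ident dy[OF te]])
    have ch: "((\<lambda>t. W (t * y t) (y t)) has_real_derivative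
        Wx (t * y t) (y t) * (1 * y t + (y t * (b t / A t)) * t) + Wy (t * y t) (y t) * (y t * (b t / A t))) (at t)"
      using chain2[where wa="\<lambda>t. t * y t" and wb=y, OF du dty dy[OF te]] by (simp add: c_def)
    have tJ: "t \<in> J" using inJ te by auto
    have qw: "poly2 Qw t 1 \<noteq> 0" and qr: "poly2 Qr t 1 \<noteq> 0" using Jfacts[OF tJ] by auto
    have qN: "poly2 Qw (y t * t) (y t * 1) \<noteq> 0" "poly2 Qr (y t * t) (y t * 1) \<noteq> 0"
      using N_dom tN by (auto simp: mult.commute)
    have sw: "rat2 Pw Qw (t * y t) (y t) = (y t)^2 * a t"
      using hom_scale[OF hom_w qw qN(1)] by (simp add: a_def mult.commute)
    have sr: "rat2 Pr Qr (t * y t) (y t) = (y t)^2 * b t"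
      using hom_scale[OF hom_r qr qN(2)] by (simp add: b_def mult.commute)
    have pde: "W (t * y t) (y t) * ((y t)^2 * b t) + Wx (t * y t) (y t) * (y t * ((y t)^2 * a t) - t * y t * ((y t)^2 * b t)) = 0"
      using W_pde tN unfolding sw[symmetric] sr[symmetric] by auto
    have eu: "t * y t * Wx (t * y t) (y t) + y t * Wy (t * y t) (y t) = W (t * y t) (y t)"
      using euler_W[OF tN] .
    have "Wx (t * y t) (y t) * (1 * y t + (y t * (b t / A t)) * t) + Wy (t * y t) (y t) * (y t * (b t / A t)) = 0"
      by (rule alg2[OF Anz ynz aAb eu pde]) (use te in auto)
    with ch show ?thesis by simp
  qed
  have Wconst: "W (ts * y ts) (y ts) = W x0 y0" if "\<bar>ts - t0\<bar> \<le> e2" for ts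
  proof -
    have "W (max ts t0 * y (max ts t0)) (y (max ts t0)) = W (min ts t0 * y (min ts t0)) (y (min ts t0))"
      by (rule const_seg[where k="\<lambda>t. W (t * y t) (y t)"]) (use that in \<open>auto intro!: dW\<close>)
    then show ?thesis using yt0 x0e by (auto simp: min_def max_def split: if_splits)
  qed
  have Smono': "S t1 \<le> S t2" if "t1 \<le> t2" "\<bar>t1 - t0\<bar> \<le> e2" "\<bar>t2 - t0\<bar> \<le> e2" for t1 t2
    using Smono[of t1 t2] that by (cases "t1 = t2") auto
  have key2: "\<phi> (x0*z) (y0*z) / z = cq"
    if dif: "\<forall>(x,y)\<in>U. \<forall>s. s \<noteq> 0 \<and> \<bar>s\<bar> < \<delta> \<longrightarrow>
                   ((\<lambda>(a,b). \<phi> a b) has_derivative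
                      (\<lambda>(h,k). \<phi>x (s*x) (s*y) * h + \<phi>y (s*x) (s*y) * k)) (at (s*x, s*y))"
    and pde: "\<forall>(x,y)\<in>U. \<forall>s. s \<noteq> 0 \<and> \<bar>s\<bar> < \<delta> \<longrightarrow>
                   \<phi>x (s*x) (s*y) * (rat2 Pw Qw (s*x) (s*y) - s*x)
                 + \<phi>y (s*x) (s*y) * (rat2 Pr Qr (s*x) (s*y) - s*y) = - \<phi> (s*x) (s*y)"
    and z: "z \<noteq> 0" "\<bar>z\<bar> < \<delta>/2"
    and ts: "\<bar>ts - t0\<bar> \<le> e2" "R ts = R t0 - z"
    and bdq: "((\<lambda>\<epsilon>. \<phi> ((ts * y ts) * \<epsilon>) (y ts * \<epsilon>) / \<epsilon>) \<longlongrightarrow> cq) (at 0)"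
  for \<phi> \<phi>x \<phi>y :: "real \<Rightarrow> real \<Rightarrow> real" and z ts cq
  proof -
    define lo where "lo = min ts t0"
    define hi where "hi = max ts t0"
    have seg: "\<bar>t - t0\<bar> \<le> e2" if "lo \<le> t" "t \<le> hi" for t
      using that ts(1) e2 by (auto simp: lo_def hi_def)
    have betw: "(R t - R ts) * (R t - R t0) \<le> 0" if "lo \<le> t" "t \<le> hi" for t
    proof -
      have lh: "lo \<le> hi" by (simp add: lo_def hi_def)
      have b3: "\<bar>lo - t0\<bar> \<le> e2" "\<bar>hi - t0\<bar> \<le> e2" "\<bar>t - t0\<bar> \<le> e2"
        using seg[of lo] seg[of hi] seg[OF that] lh by auto
      have "S lo \<le> S t" "S t \<le> S hi"
        using Smono'[OF that(1) b3(1) b3(3)] Smono'[OF that(2) b3(3) b3(2)] by auto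
      then have "(S t - S ts) * (S t - S t0) \<le> 0"
        by (cases "ts \<le> t0") (auto simp: lo_def hi_def mult_le_0_iff)
      moreover have "(S t - S ts) * (S t - S t0) = (D0 * D0) * ((R t - R ts) * (R t - R t0))"
        by (simp add: S_def algebra_simps)
      moreover have "D0 * D0 > 0" using D0nz not_real_square_gt_zero by blast
      ultimately show ?thesis by (metis mult_pos_pos not_le)
    qed
    have eqth: "\<phi> ((z*\<theta>) * (ts * y ts)) ((z*\<theta>) * y ts) / (z*\<theta>)
              = \<phi> ((z + z*\<theta>) * x0) ((z + z*\<theta>) * y0) / (z + z*\<theta>)" if th: "0 < \<theta>" "\<theta> < 1" for \<theta>
    proof -
      define Z where "Z = (\<lambda>t. z*\<theta> + R t - R ts)"
      define k where "k = (\<lambda>t. \<phi> (Z t * (t * y t)) (Z t * y t) / Z t)"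
      have Zb: "Z t \<noteq> 0 \<and> \<bar>Z t\<bar> < \<delta>" if "lo \<le> t" "t \<le> hi" for t
      proof -
        define r where "r = R t - R ts"
        have "r * (r - z) \<le> 0" using betw[OF that] ts(2) by (simp add: r_def)
        then have rr: "(0 \<le> r \<and> r \<le> z) \<or> (r \<le> 0 \<and> z \<le> r)" by (auto simp: mult_le_0_iff)
        have Zr: "Z t = z*\<theta> + r" by (simp add: Z_def r_def)
        show ?thesis
        proof (cases "z > 0")
          case True
          have h1: "0 < z*\<theta>" "z*\<theta> < z" using th True by (auto simp: mult_less_cancel_left1)
          have h2: "0 \<le> r" "r \<le> z" using rr True by auto
          have "0 < Z t" "Z t < \<delta>" using Zr h1 h2 z by linarith+
          then show ?thesis by auto
        next
          case False
          then have zn: "z < 0" using z by auto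
          have h1: "z*\<theta> < 0" "z < z*\<theta>" using th zn by (auto simp: mult_neg_pos)
          have h2: "r \<le> 0" "z \<le> r" using rr zn by auto
          have "Z t < 0" "- \<delta> < Z t" using Zr h1 h2 z by linarith+
          then show ?thesis by auto
        qed
      qed
      have dk: "(k has_real_derivative 0) (at t)" if tt: "lo \<le> t" "t \<le> hi" for t
      proof -
        have t2: "\<bar>t - t0\<bar> \<le> e2" using seg[OF tt] .
        have tU: "(t * y t, y t) \<in> U" and te: "\<bar>t - t0\<bar> < e" using e2(3)[OF t2] t2 e2 by auto
        have Zt: "Z t \<noteq> 0" "\<bar>Z t\<bar> < \<delta>" using Zb[OF tt] by auto
        have du: "((\<lambda>(a,b). \<phi> a b) has_derivative (\<lambda>(h,k). \<phi>x (Z t * (t * y t)) (Z t * y t) * h + \<phi>y (Z t * (t * y t)) (Z t * y t) * k))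
            (at (Z t * (t * y t), Z t * y t))"
          using bspec[OF dif tU] Zt by simp
        have dZ: "(Z has_real_derivative - 1 / (y t * A t)) (at t)"
          unfolding Z_def using DERIV_diff[OF DERIV_add[OF DERIV_const dR[OF te]] DERIV_const] by simp
        have dty: "((\<lambda>t. t * y t) has_real_derivative 1 * y t + (y t * c t) * t) (at t)"
          by (rule DERIV_mult[OF DERIV_ident dy[OF te]])
        have dw1: "((\<lambda>t. Z t * (t * y t)) has_real_derivative (- 1 / (y t * A t)) * (t * y t) + (1 * y t + (y t * c t) * t) * Z t) (at t)"
          by (rule DERIV_mult[OF dZ dty])
        have dw2: "((\<lambda>t. Z t * y t) has_real_derivative (- 1 / (y t * A t)) * y t + (y t * c t) * Z t) (at t)"
          by (rule DERIV_mult[OF dZ dy[OF te]])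
        note ch = chain2[where wa="\<lambda>t. Z t * (t * y t)" and wb="\<lambda>t. Z t * y t", OF du dw1 dw2]
        have dk0: "(k has_real_derivative
            ((\<phi>x (Z t * (t * y t)) (Z t * y t) * ((- 1 / (y t * A t)) * (t * y t) + (1 * y t + (y t * c t) * t) * Z t)
             + \<phi>y (Z t * (t * y t)) (Z t * y t) * ((- 1 / (y t * A t)) * y t + (y t * c t) * Z t)) * Z t
             - \<phi> (Z t * (t * y t)) (Z t * y t) * (- 1 / (y t * A t))) / (Z t * Z t)) (at t)"
          unfolding k_def by (rule DERIV_divide[OF ch dZ Zt(1)])
        have tJ: "t \<in> J" using inJ te by auto
        have qw: "poly2 Qw t 1 \<noteq> 0" and qr: "poly2 Qr t 1 \<noteq> 0" using Jfacts[OF tJ] by auto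
        have eq1: "Z t * y t * t = Z t * (t * y t)" by (simp only: mult.assoc mult.commute[of "y t" t])
        have e1: "Z t * y t * 1 = Z t * y t" by (rule mult_1_right)
        have qU: "poly2 Qw (Z t * y t * t) (Z t * y t * 1) \<noteq> 0" "poly2 Qr (Z t * y t * t) (Z t * y t * 1) \<noteq> 0"
        proof -
          have h: "poly2 Qw (Z t * (t * y t)) (Z t * y t) \<noteq> 0 \<and> poly2 Qr (Z t * (t * y t)) (Z t * y t) \<noteq> 0"
          proof -
            have h0: "\<forall>s. s \<noteq> 0 \<and> \<bar>s\<bar> < \<delta> \<longrightarrow> poly2 Qw (s*(t*y t)) (s*y t) \<noteq> 0 \<and> poly2 Qr (s*(t*y t)) (s*y t) \<noteq> 0"
              using bspec[OF uv_dom tU] by simp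
            show ?thesis using h0 Zt by blast
          qed
          show "poly2 Qw (Z t * y t * t) (Z t * y t * 1) \<noteq> 0" "poly2 Qr (Z t * y t * t) (Z t * y t * 1) \<noteq> 0"
            using h by (subst eq1 e1, subst eq1 e1, blast)+
        qed
        have sw: "rat2 Pw Qw (Z t * (t * y t)) (Z t * y t) = (Z t * y t)^2 * a t"
          unfolding a_def using hom_scale[OF hom_w qw qU(1)] eq1 e1 by metis
        have sr: "rat2 Pr Qr (Z t * (t * y t)) (Z t * y t) = (Z t * y t)^2 * b t"
          unfolding b_def using hom_scale[OF hom_r qr qU(2)] eq1 e1 by metis
        have p: "\<phi>x (Z t * (t * y t)) (Z t * y t) * ((Z t * y t)^2 * a t - Z t * (t * y t))
               + \<phi>y (Z t * (t * y t)) (Z t * y t) * ((Z t * y t)^2 * b t - Z t * y t) = - \<phi> (Z t * (t * y t)) (Z t * y t)"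
          using bspec[OF pde tU] Zt unfolding sw[symmetric] sr[symmetric] by simp
        have "(\<phi>x (Z t * (t * y t)) (Z t * y t) * ((- 1 / (y t * A t)) * (t * y t) + (1 * y t + (y t * (b t / A t)) * t) * Z t)
             + \<phi>y (Z t * (t * y t)) (Z t * y t) * ((- 1 / (y t * A t)) * y t + (y t * (b t / A t)) * Z t)) * Z t
             - \<phi> (Z t * (t * y t)) (Z t * y t) * (- 1 / (y t * A t)) = 0"
          by (rule alg1[OF Anz ynz aAb p]) (use te in auto)
        from dk0[unfolded c_def, unfolded this] show ?thesis by simp
      qed
      have "k hi = k lo" by (rule const_seg) (auto simp: lo_def hi_def intro!: dk)
      then have "k ts = k t0" by (auto simp: lo_def hi_def min_def max_def split: if_splits)
      moreover have "Z ts = z*\<theta>" "Z t0 = z + z*\<theta>" using ts(2) by (auto simp: Z_def)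
      ultimately show ?thesis by (simp add: k_def yt0 x0e[symmetric])
    qed
    define G where "G = (\<lambda>s. \<phi> (s*x0) (s*y0) / s)"
    have Gc: "isCont G z"
    proof -
      have zz: "z \<noteq> 0 \<and> \<bar>z\<bar> < \<delta>" using z by auto
      have du: "((\<lambda>(a,b). \<phi> a b) has_derivative (\<lambda>(h,k). \<phi>x (z*x0) (z*y0) * h + \<phi>y (z*x0) (z*y0) * k)) (at (z*x0, z*y0))"
        using bspec[OF dif x0y0_U] zz by simp
      have "((\<lambda>s. \<phi> (s*x0) (s*y0)) has_real_derivative (\<phi>x (z*x0) (z*y0) * x0 + \<phi>y (z*x0) (z*y0) * y0)) (at z)"
        by (rule chain2[where wa="\<lambda>r. r*x0" and wb="\<lambda>r. r*y0", OF du]) (auto intro!: derivative_eq_intros)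
      then have "(G has_real_derivative ((\<phi>x (z*x0) (z*y0) * x0 + \<phi>y (z*x0) (z*y0) * y0) * z - \<phi> (z*x0) (z*y0) * 1) / (z * z)) (at z)"
        unfolding G_def by (rule DERIV_divide[OF _ DERIV_ident z(1)])
      then show ?thesis by (rule DERIV_isCont)
    qed
    have "((\<lambda>\<theta>. z + z*\<theta>) \<longlongrightarrow> z + z*0) (at_right (0::real))" by (intro tendsto_intros)
    then have L2: "((\<lambda>\<theta>. G (z + z*\<theta>)) \<longlongrightarrow> G z) (at_right 0)"
      using isCont_tendsto_compose[OF Gc] by simp
    have L1': "((\<lambda>\<theta>. \<phi> ((ts * y ts) * (z*\<theta>)) (y ts * (z*\<theta>)) / (z*\<theta>)) \<longlongrightarrow> cq) (at_right 0)"
      using lim_scaled[OF bdq z(1)] by simp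
    have cm: "\<phi> ((ts * y ts) * (z*\<theta>)) (y ts * (z*\<theta>)) / (z*\<theta>) = \<phi> ((z*\<theta>) * (ts * y ts)) ((z*\<theta>) * y ts) / (z*\<theta>)" for \<theta>
      by (metis mult.commute)
    have E: "eventually (\<lambda>\<theta>. \<phi> ((ts * y ts) * (z*\<theta>)) (y ts * (z*\<theta>)) / (z*\<theta>) = G (z + z*\<theta>)) (at_right 0)"
      by (rule eventually_at_rightI[of 0 1]) (auto simp: cm eqth G_def)
    have "((\<lambda>\<theta>. G (z + z*\<theta>)) \<longlongrightarrow> cq) (at_right 0)" using tendsto_cong[OF E, of cq] L1' by simp
    then have "G z = cq" using L2 tendsto_unique[of "at_right (0::real)"] by force
    then show ?thesis by (simp add: G_def mult.commute)
  qed
  have Sp: "S t0 < S (t0+e2)" "S (t0-e2) < S t0" using Smono e2 by auto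
  define d where "d = min (\<delta>/2) (min ((S (t0+e2) - S t0) / \<bar>D0\<bar>) ((S t0 - S (t0-e2)) / \<bar>D0\<bar>))"
  have dpos: "d > 0" using Sp D0nz delta_pos by (simp add: d_def)
  have Ev: "eventually (\<lambda>z. z \<noteq> 0 \<and> \<bar>z\<bar> < d) (at (0::real))"
    unfolding eventually_at using dpos by (intro exI[of _ d]) auto
  show ?thesis
  proof (rule eventually_mono[OF Ev])
    fix z :: real assume zd: "z \<noteq> 0 \<and> \<bar>z\<bar> < d"
    have zz: "z \<noteq> 0" "\<bar>z\<bar> < \<delta>/2" using zd by (auto simp: d_def)
    have "\<bar>D0 * z\<bar> < S (t0+e2) - S t0" "\<bar>D0 * z\<bar> < S t0 - S (t0-e2)"
    proof -
      have "\<bar>z\<bar> < (S (t0+e2) - S t0) / \<bar>D0\<bar>" "\<bar>z\<bar> < (S t0 - S (t0-e2)) / \<bar>D0\<bar>"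
        using zd by (auto simp: d_def)
      then show "\<bar>D0 * z\<bar> < S (t0+e2) - S t0" "\<bar>D0 * z\<bar> < S t0 - S (t0-e2)"
        using D0nz by (auto simp: abs_mult field_simps)
    qed
    then have lim: "S (t0-e2) \<le> S t0 + D0 * z" "S t0 + D0 * z \<le> S (t0+e2)" by (auto simp: abs_less_iff)
    obtain ts where ts: "t0-e2 \<le> ts" "ts \<le> t0+e2" "S ts = S t0 + D0 * z"
    proof -
      have "\<forall>x. t0 - e2 \<le> x \<and> x \<le> t0 + e2 \<longrightarrow> isCont S x" using Scont by (auto simp: abs_le_iff)
      then have "\<exists>x. t0-e2 \<le> x \<and> x \<le> t0+e2 \<and> S x = S t0 + D0 * z"
        using IVT[of S "t0-e2" "S t0 + D0 * z" "t0+e2", OF lim] e2 by auto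
      then show ?thesis using that by blast
    qed
    have tsb: "\<bar>ts - t0\<bar> \<le> e2" using ts by auto
    have Rts: "R ts = R t0 - z"
    proof -
      have "D0 * (R t0 - z - R ts) = 0" using ts(3) by (simp add: S_def algebra_simps)
      then show ?thesis using D0nz by simp
    qed
    have qU: "(ts * y ts, y ts) \<in> U" using e2(3)[OF tsb] by auto
    have ub: "((\<lambda>\<epsilon>. u ((ts * y ts) * \<epsilon>) (y ts * \<epsilon>) / \<epsilon>) \<longlongrightarrow> ts * y ts) (at 0)"
      using bspec[OF u_bd qU] by simp
    have vb: "((\<lambda>\<epsilon>. v ((ts * y ts) * \<epsilon>) (y ts * \<epsilon>) / \<epsilon>) \<longlongrightarrow> y ts) (at 0)"
      using bspec[OF v_bd qU] by simp
    have uz: "u (x0*z) (y0*z) / z = ts * y ts" by (rule key2[OF u_diff u_pde zz tsb Rts ub])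
    have vz: "v (x0*z) (y0*z) / z = y ts" by (rule key2[OF v_diff v_pde zz tsb Rts vb])
    have W1: "W (ts * y ts) (y ts) = W x0 y0" by (rule Wconst[OF tsb])
    have F1: "1 / y ts * f ((ts * y ts) / y ts) = 1 / y0 * f (x0 / y0) - z"
    proof -
      have "(ts * y ts) / y ts = ts" using ynz[of ts] by simp
      moreover have "1 / y ts * f ts = R ts" by (simp add: R_def)
      moreover have "R t0 = 1 / y0 * f (x0 / y0)" using yt0 by (simp add: R_def t0_def[symmetric])
      ultimately show ?thesis using Rts by simp
    qed
    show "let uz = u (x0*z) (y0*z) / z; vz = v (x0*z) (y0*z) / z in
              W uz vz = W x0 y0 \<and> 1 / vz * f (uz / vz) = 1 / y0 * f (x0 / y0) - z"
      using uz vz W1 F1 by (simp add: Let_def)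
  qed
qed
end

theorem theorem2:
  fixes Pw Qw Pr Qr :: "real poly poly"
    and u v ux uy vx vy W Wx Wy :: "real \<Rightarrow> real \<Rightarrow> real"
    and f f' :: "real \<Rightarrow> real"
    and x0 y0 \<delta> :: real
    and U N :: "(real \<times> real) set" and J :: "real set"
  assumes hom_w: "homogeneous_rat2 2 Pw Qw"
    and hom_r: "homogeneous_rat2 2 Pr Qr"
    and nondeg: "\<exists>x y. x * poly2 Pr x y * poly2 Qw x y - y * poly2 Pw x y * poly2 Qr x y \<noteq> 0"
    \<comment> \<open>the pair (u,v): defined near the origin along rays through points of U\<close>
    and U_open: "open U" and x0y0_U: "(x0, y0) \<in> U" and delta_pos: "\<delta> > 0"
    and uv_dom: "\<forall>(x,y)\<in>U. \<forall>s. s \<noteq> 0 \<and> \<bar>s\<bar> < \<delta> \<longrightarrow>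
                   poly2 Qw (s*x) (s*y) \<noteq> 0 \<and> poly2 Qr (s*x) (s*y) \<noteq> 0"
    and u_diff: "\<forall>(x,y)\<in>U. \<forall>s. s \<noteq> 0 \<and> \<bar>s\<bar> < \<delta> \<longrightarrow>
                   ((\<lambda>(a,b). u a b) has_derivative
                      (\<lambda>(h,k). ux (s*x) (s*y) * h + uy (s*x) (s*y) * k)) (at (s*x, s*y))"
    and v_diff: "\<forall>(x,y)\<in>U. \<forall>s. s \<noteq> 0 \<and> \<bar>s\<bar> < \<delta> \<longrightarrow>
                   ((\<lambda>(a,b). v a b) has_derivative
                      (\<lambda>(h,k). vx (s*x) (s*y) * h + vy (s*x) (s*y) * k)) (at (s*x, s*y))"
    and u_pde: "\<forall>(x,y)\<in>U. \<forall>s. s \<noteq> 0 \<and> \<bar>s\<bar> < \<delta> \<longrightarrow>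
                   ux (s*x) (s*y) * (rat2 Pw Qw (s*x) (s*y) - s*x)
                 + uy (s*x) (s*y) * (rat2 Pr Qr (s*x) (s*y) - s*y) = - u (s*x) (s*y)"
    and v_pde: "\<forall>(x,y)\<in>U. \<forall>s. s \<noteq> 0 \<and> \<bar>s\<bar> < \<delta> \<longrightarrow>
                   vx (s*x) (s*y) * (rat2 Pw Qw (s*x) (s*y) - s*x)
                 + vy (s*x) (s*y) * (rat2 Pr Qr (s*x) (s*y) - s*y) = - v (s*x) (s*y)"
    and u_bd: "\<forall>(x,y)\<in>U. ((\<lambda>z. u (x*z) (y*z) / z) \<longlongrightarrow> x) (at 0)"
    and v_bd: "\<forall>(x,y)\<in>U. ((\<lambda>z. v (x*z) (y*z) / z) \<longlongrightarrow> y) (at 0)"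
    \<comment> \<open>f solves the ODE on an open set J containing x0/y0\<close>
    and y0_nz: "y0 \<noteq> 0"
    and J_open: "open J" and J_pt: "x0 / y0 \<in> J"
    and f_ode: "\<forall>t\<in>J. poly2 Qw t 1 \<noteq> 0 \<and> poly2 Qr t 1 \<noteq> 0 \<and>
                   (f has_real_derivative f' t) (at t) \<and>
                   f t * rat2 Pr Qr t 1 + f' t * (t * rat2 Pr Qr t 1 - rat2 Pw Qw t 1) = 1"
    \<comment> \<open>W is a 1-homogeneous solution of its PDE on an open set N containing (x0,y0)\<close>
    and N_open: "open N" and x0y0_N: "(x0, y0) \<in> N"
    and N_dom: "\<forall>(x,y)\<in>N. poly2 Qw x y \<noteq> 0 \<and> poly2 Qr x y \<noteq> 0"
    and W_hom: "\<forall>(x,y)\<in>N. \<forall>t>0. (t*x, t*y) \<in> N \<longrightarrow> W (t*x) (t*y) = t * W x y"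
    and W_diff: "\<forall>(x,y)\<in>N. ((\<lambda>(a,b). W a b) has_derivative
                   (\<lambda>(h,k). Wx x y * h + Wy x y * k)) (at (x, y))"
    and W_pde: "\<forall>(x,y)\<in>N. W x y * rat2 Pr Qr x y
                   + Wx x y * (y * rat2 Pw Qw x y - x * rat2 Pr Qr x y) = 0"
  shows "\<forall>\<^sub>F z in at 0.
           (let uz = u (x0*z) (y0*z) / z; vz = v (x0*z) (y0*z) / z in
              W uz vz = W x0 y0 \<and> 1 / vz * f (uz / vz) = 1 / y0 * f (x0 / y0) - z)"
  proof (cases "rat2 Pw Qw (x0/y0) 1 - (x0/y0) * rat2 Pr Qr (x0/y0) 1 = 0")
  case True
  show ?thesis by (rule case_zero[OF assms True])
next
  case False
  show ?thesis by (rule case_nonzero[OF assms False])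
qed

end
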